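(* Let $(\Omega=\mathcal{A}\otimes\bigwedge(\mathbb{C}^2),\mathrm{d},\bar{\mathrm{d}})$ be a bidifferential graded algebra with $\mathcal{A}=\mathrm{Mat}_{n_0}(\mathcal{B})$, $\mathcal{B}$ a unital complex algebra, $n_0\in\mathbb{N}$, and $\mathrm{d},\bar{\mathrm{d}}$ respecting matrix sizes. Let $n,m\ge n_0$ and let $\mathbf{P},\hat{\mathbf{K}}\in\mathrm{Mat}(n,n,\mathcal{B})$, $\mathbf{V}\in\mathrm{Mat}(n,m,\mathcal{B})$, $\hat{\mathbf{U}}\in\mathrm{Mat}(m,n,\mathcal{B})$ be $\mathrm{d}$- and $\bar{\mathrm{d}}$-constant. Let $\hat{\mathbf{\Xi}}\in\mathrm{Mat}(n,n,\mathcal{B})$ satisfy $$\bar{\mathrm{d}}\hat{\mathbf{\Xi}}=(\mathrm{d}\hat{\mathbf{\Xi}})\,\mathbf{P}\qquad\text{and}\qquad [\mathbf{P},\hat{\mathbf{K}}\hat{\mathbf{\Xi}}]=\mathbf{V}\hat{\mathbf{U}}\hat{\mathbf{\Xi}}.$$ If $\mathbf{I}-\hat{\mathbf{K}}\hat{\mathbf{\Xi}}$ is invertible, then $\phi=\hat{\mathbf{U}}\,\hat{\mathbf{\Xi}}\,(\mathbf{I}-\hat{\mathbf{K}}\hat{\mathbf{\Xi}})^{-1}\mathbf{V}$ solves $\bar{\mathrm{d}}\mathrm{d}\phi=\mathrm{d}\phi\,\mathrm{d}\phi$.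
   Context: A bidifferential graded algebra is a graded algebra $\Omega=\bigoplus_{r\ge0}\Omega^r$ with two degree-one linear maps $\mathrm{d},\bar{\mathrm{d}}$ satisfying $\mathrm{d}^2=\bar{\mathrm{d}}^2=\mathrm{d}\bar{\mathrm{d}}+\bar{\mathrm{d}}\mathrm{d}=0$ and the graded Leibniz rule. $\mathrm{Mat}_{n_0}(\mathcal{B}):=\bigoplus_{n',n\ge n_0}\mathrm{Mat}(n',n,\mathcal{B})$ with the matrix product extended by zero for non-matching sizes; elements of $\bigwedge(\mathbb{C}^2)$ are constants; "respecting matrix sizes" means $\mathrm{d},\bar{\mathrm{d}}$ map $\mathrm{Mat}(n',n,\mathcal{B})\otimes\bigwedge(\mathbb{C}^2)$ into itself. $\mathrm{d}$- and $\bar{\mathrm{d}}$-constant means annihilated by both maps. $\mathbf{I}=I_n$. *)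

theory Defs
  imports Complex_Main "Jordan_Normal_Form.Matrix"
begin

text \<open>A unital complex algebra structure on a unital ring 'b is given by a unital ring
homomorphism sc from the complex numbers into the centre of 'b; complex scalar
multiplication is c . x = sc c * x.\<close>

definition unital_calg :: "(complex \<Rightarrow> 'b::ring_1) \<Rightarrow> bool" where
  "unital_calg sc \<longleftrightarrow> sc 1 = 1 \<and> (\<forall>a b. sc (a + b) = sc a + sc b)
     \<and> (\<forall>a b. sc (a * b) = sc a * sc b) \<and> (\<forall>c x. sc c * x = x * sc c)"

text \<open>An element of the block Mat(p,q,B) (x) Wedge(C^2) of Omega: four p x q matrices,
indexed by (e1,e2), the coefficient of xi1^e1 xi2^e2 (canonical order xi1 xi2).\<close>

type_synonym 'b form = "bool \<times> bool \<Rightarrow> 'b mat"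

definition fdeg :: "bool \<times> bool \<Rightarrow> nat" where
  "fdeg S = (if fst S then 1 else 0) + (if snd S then 1 else 0)"

definition blk :: "nat \<Rightarrow> nat \<Rightarrow> 'b::zero form set" where
  "blk p q = {\<omega>. \<forall>S. \<omega> S \<in> carrier_mat p q}"

definition zf :: "nat \<Rightarrow> nat \<Rightarrow> 'b::zero form" where
  "zf p q = (\<lambda>S. 0\<^sub>m p q)"

text \<open>homogeneous of degree r (for r \<ge> 3 this means zero)\<close>
definition homog :: "nat \<Rightarrow> 'b::zero form \<Rightarrow> bool" where
  "homog r \<omega> \<longleftrightarrow> (\<forall>S. fdeg S \<noteq> r \<longrightarrow> \<omega> S = 0\<^sub>m (dim_row (\<omega> S)) (dim_col (\<omega> S)))"

definition fadd :: "'b::plus form \<Rightarrow> 'b form \<Rightarrow> 'b form" where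
  "fadd \<omega> \<eta> = (\<lambda>S. \<omega> S + \<eta> S)"

definition fsmult :: "(complex \<Rightarrow> 'b::times) \<Rightarrow> complex \<Rightarrow> 'b form \<Rightarrow> 'b form" where
  "fsmult sc c \<omega> = (\<lambda>S. sc c \<cdot>\<^sub>m \<omega> S)"

text \<open>Product in Omega: (A xi_S)(B xi_T) = A B xi_S xi_T, with xi_i xi_i = 0 and
xi2 xi1 = - xi1 xi2.\<close>
definition fmult :: "'b::ring_1 form \<Rightarrow> 'b form \<Rightarrow> 'b form" where
  "fmult \<omega> \<eta> = (\<lambda>S. case S of
      (False, False) \<Rightarrow> \<omega> (False, False) * \<eta> (False, False)
    | (True, False) \<Rightarrow> \<omega> (True, False) * \<eta> (False, False) + \<omega> (False, False) * \<eta> (True, False)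
    | (False, True) \<Rightarrow> \<omega> (False, True) * \<eta> (False, False) + \<omega> (False, False) * \<eta> (False, True)
    | (True, True) \<Rightarrow> \<omega> (True, True) * \<eta> (False, False) + \<omega> (False, False) * \<eta> (True, True)
          + \<omega> (True, False) * \<eta> (False, True) - \<omega> (False, True) * \<eta> (True, False))"

definition of0 :: "'b::zero mat \<Rightarrow> 'b form" where
  "of0 A = (\<lambda>S. if S = (False, False) then A else 0\<^sub>m (dim_row A) (dim_col A))"

text \<open>An element I_q (x) w with w in Wedge(C^2), w = sum_S c_S xi_S.\<close>
definition wedge_const :: "(complex \<Rightarrow> 'b::ring_1) \<Rightarrow> nat \<Rightarrow> (bool \<times> bool \<Rightarrow> complex) \<Rightarrow> 'b form" where
  "wedge_const sc q c = (\<lambda>S. sc (c S) \<cdot>\<^sub>m 1\<^sub>m q)"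

text \<open>Axioms of a single degree-one derivation d on Omega = Mat_{n0}(B) (x) Wedge(C^2)
respecting matrix sizes, stated blockwise (d is the direct sum of its blocks).\<close>
definition size_resp_deriv :: "nat \<Rightarrow> (complex \<Rightarrow> 'b::ring_1) \<Rightarrow> ('b form \<Rightarrow> 'b form) \<Rightarrow> bool" where
  "size_resp_deriv n0 sc d \<longleftrightarrow>
     (\<forall>p q \<omega>. n0 \<le> p \<longrightarrow> n0 \<le> q \<longrightarrow> \<omega> \<in> blk p q \<longrightarrow> d \<omega> \<in> blk p q)
   \<and> (\<forall>p q \<omega> \<eta>. n0 \<le> p \<longrightarrow> n0 \<le> q \<longrightarrow> \<omega> \<in> blk p q \<longrightarrow> \<eta> \<in> blk p q \<longrightarrow>
        d (fadd \<omega> \<eta>) = fadd (d \<omega>) (d \<eta>))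
   \<and> (\<forall>p q \<omega> c. n0 \<le> p \<longrightarrow> n0 \<le> q \<longrightarrow> \<omega> \<in> blk p q \<longrightarrow> d (fsmult sc c \<omega>) = fsmult sc c (d \<omega>))
   \<and> (\<forall>p q \<omega> r. n0 \<le> p \<longrightarrow> n0 \<le> q \<longrightarrow> \<omega> \<in> blk p q \<longrightarrow> homog r \<omega> \<longrightarrow> homog (Suc r) (d \<omega>))
   \<and> (\<forall>p k q \<omega> \<eta> r. n0 \<le> p \<longrightarrow> n0 \<le> k \<longrightarrow> n0 \<le> q \<longrightarrow> \<omega> \<in> blk p k \<longrightarrow> \<eta> \<in> blk k q \<longrightarrow>
        homog r \<omega> \<longrightarrow>
        d (fmult \<omega> \<eta>) = fadd (fmult (d \<omega>) \<eta>) (fsmult sc ((-1) ^ r) (fmult \<omega> (d \<eta>))))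
   \<and> (\<forall>q c. n0 \<le> q \<longrightarrow> d (wedge_const sc q c) = zf q q)"

definition bdga :: "nat \<Rightarrow> (complex \<Rightarrow> 'b::ring_1) \<Rightarrow> ('b form \<Rightarrow> 'b form) \<Rightarrow> ('b form \<Rightarrow> 'b form) \<Rightarrow> bool" where
  "bdga n0 sc d db \<longleftrightarrow> unital_calg sc \<and> size_resp_deriv n0 sc d \<and> size_resp_deriv n0 sc db
   \<and> (\<forall>p q \<omega>. n0 \<le> p \<longrightarrow> n0 \<le> q \<longrightarrow> \<omega> \<in> blk p q \<longrightarrow>
        d (d \<omega>) = zf p q \<and> db (db \<omega>) = zf p q \<and> fadd (d (db \<omega>)) (db (d \<omega>)) = zf p q)"

definition const_mat :: "('b::ring_1 form \<Rightarrow> 'b form) \<Rightarrow> ('b form \<Rightarrow> 'b form) \<Rightarrow> 'b mat \<Rightarrow> bool" where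
  "const_mat d db A \<longleftrightarrow> d (of0 A) = zf (dim_row A) (dim_col A) \<and> db (of0 A) = zf (dim_row A) (dim_col A)"

end

theory Submission
  imports Defs
begin

lemma massoc: "dim_col A = dim_row B \<Longrightarrow> dim_col B = dim_row C \<Longrightarrow> A*B*C = A*(B*C)"
  by (rule assoc_mult_mat[of A "dim_row A" "dim_col A" B "dim_col B" C "dim_col C"]) auto

lemma mdistL: "dim_col (A::'a::semiring_0 mat) = dim_row B \<Longrightarrow> dim_row B = dim_row C \<Longrightarrow> dim_col B = dim_col C \<Longrightarrow> A*(B+C) = A*B+A*C"
  by (rule mult_add_distrib_mat[of A "dim_row A" "dim_col A" B "dim_col B"]) auto

lemma mdistR: "dim_col (A::'a::semiring_0 mat) = dim_row C \<Longrightarrow> dim_row A = dim_row B \<Longrightarrow> dim_col A = dim_col B \<Longrightarrow> (A+B)*C = A*C+B*C"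
  by (rule add_mult_distrib_mat[of A "dim_row A" "dim_col A" B C "dim_col C"]) auto

lemma mdistLm: "dim_col (A::'a::ring mat) = dim_row B \<Longrightarrow> dim_row B = dim_row C \<Longrightarrow> dim_col B = dim_col C \<Longrightarrow> A*(B-C) = A*B-A*C"
  by (rule mult_minus_distrib_mat[of A "dim_row A" "dim_col A" B "dim_col B"]) auto

lemma mdistRm: "dim_col (A::'a::ring mat) = dim_row C \<Longrightarrow> dim_row A = dim_row B \<Longrightarrow> dim_col A = dim_col B \<Longrightarrow> (A-B)*C = A*C-B*C"
  by (rule minus_mult_distrib_mat[of A "dim_row A" "dim_col A" B C "dim_col C"]) auto

lemmas msimps = massoc mdistL mdistR mdistLm mdistRm

lemma fdim: "\<omega> \<in> blk p q \<Longrightarrow> dim_row (\<omega> S) = p \<and> dim_col (\<omega> S) = q"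
  unfolding blk_def carrier_mat_def by (cases S) auto

lemma form_eqI: "(\<And>a b. \<omega> (a,b) = \<eta> (a,b)) \<Longrightarrow> \<omega> = \<eta>"
  by auto

lemma blkI: "(\<And>a b. dim_row (\<omega> (a,b)) = p \<and> dim_col (\<omega> (a,b)) = q) \<Longrightarrow> \<omega> \<in> blk p q"
  unfolding blk_def carrier_mat_def by auto

lemma fmult_blk: "\<omega> \<in> blk p k \<Longrightarrow> \<eta> \<in> blk k q \<Longrightarrow> fmult \<omega> \<eta> \<in> blk p q"
  apply (rule blkI) subgoal for a b by (cases a; cases b) (auto simp: fmult_def dest!: fdim[where S="(_,_)"]) done

lemma fmult_assoc:
  assumes a: "\<omega> \<in> blk p k" and b: "\<eta> \<in> blk k l" and c: "\<zeta> \<in> blk l q"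
  shows "fmult (fmult \<omega> \<eta>) \<zeta> = fmult \<omega> (fmult \<eta> \<zeta>)"
proof (rule form_eqI)
  fix x y
  note D = fdim[OF a] fdim[OF b] fdim[OF c]
  show "fmult (fmult \<omega> \<eta>) \<zeta> (x,y) = fmult \<omega> (fmult \<eta> \<zeta>) (x,y)"
    by (cases x; cases y) (auto simp: fmult_def D msimps intro!: eq_matI simp: algebra_simps)
qed

lemma fadd_blk: "\<omega> \<in> blk p q \<Longrightarrow> \<eta> \<in> blk p q \<Longrightarrow> fadd \<omega> \<eta> \<in> blk p q"
  unfolding blk_def fadd_def by auto

lemma fsmult_blk: "\<omega> \<in> blk p q \<Longrightarrow> fsmult sc c \<omega> \<in> blk p q"
  unfolding blk_def fsmult_def by auto

lemma of0_blk: "A \<in> carrier_mat p q \<Longrightarrow> of0 A \<in> blk p q"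
  unfolding blk_def of0_def by auto

lemma zf_blk: "zf p q \<in> blk p q"
  unfolding blk_def zf_def by auto

lemma fmult_fadd_L:
  assumes a: "\<omega> \<in> blk p k" and b: "\<eta> \<in> blk k q" and c: "\<zeta> \<in> blk k q"
  shows "fmult \<omega> (fadd \<eta> \<zeta>) = fadd (fmult \<omega> \<eta>) (fmult \<omega> \<zeta>)"
proof (rule form_eqI)
  fix x y
  note D = fdim[OF a] fdim[OF b] fdim[OF c]
  show "fmult \<omega> (fadd \<eta> \<zeta>) (x,y) = fadd (fmult \<omega> \<eta>) (fmult \<omega> \<zeta>) (x,y)"
    by (cases x; cases y) (auto simp: fmult_def fadd_def D msimps intro!: eq_matI simp: algebra_simps)
qed

lemma fmult_fadd_R:
  assumes a: "\<omega> \<in> blk p k" and b: "\<eta> \<in> blk p k" and c: "\<zeta> \<in> blk k q"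
  shows "fmult (fadd \<omega> \<eta>) \<zeta> = fadd (fmult \<omega> \<zeta>) (fmult \<eta> \<zeta>)"
proof (rule form_eqI)
  fix x y
  note D = fdim[OF a] fdim[OF b] fdim[OF c]
  show "fmult (fadd \<omega> \<eta>) \<zeta> (x,y) = fadd (fmult \<omega> \<zeta>) (fmult \<eta> \<zeta>) (x,y)"
    by (cases x; cases y) (auto simp: fmult_def fadd_def D msimps intro!: eq_matI simp: algebra_simps)
qed

lemma fmult_zfL: assumes b: "\<eta> \<in> blk k q" shows "fmult (zf p k) \<eta> = zf p q"
proof (rule form_eqI)
  fix x y
  note D = fdim[OF b]
  show "fmult (zf p k) \<eta> (x,y) = zf p q (x,y)"
    by (cases x; cases y) (auto simp: fmult_def zf_def D intro!: eq_matI)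
qed

lemma fmult_zfR: assumes b: "\<eta> \<in> blk p k" shows "fmult \<eta> (zf k q) = zf p q"
proof (rule form_eqI)
  fix x y
  note D = fdim[OF b]
  show "fmult \<eta> (zf k q) (x,y) = zf p q (x,y)"
    by (cases x; cases y) (auto simp: fmult_def zf_def D intro!: eq_matI)
qed

lemma fadd_zfL: fixes \<eta> :: "'b::ring_1 form" assumes b: "\<eta> \<in> blk p q" shows "fadd (zf p q) \<eta> = \<eta>"
  using fdim[OF b] by (auto simp: fadd_def zf_def intro!: ext eq_matI)

lemma fadd_zfR: fixes \<eta> :: "'b::ring_1 form" assumes b: "\<eta> \<in> blk p q" shows "fadd \<eta> (zf p q) = \<eta>"
  using fdim[OF b] by (auto simp: fadd_def zf_def intro!: ext eq_matI)

lemma fadd_assoc: fixes \<omega> :: "'b::ring_1 form" assumes a: "\<omega> \<in> blk p q" and b: "\<eta> \<in> blk p q" and c: "\<zeta> \<in> blk p q"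
  shows "fadd (fadd \<omega> \<eta>) \<zeta> = fadd \<omega> (fadd \<eta> \<zeta>)"
  using fdim[OF a] fdim[OF b] fdim[OF c] by (auto simp: fadd_def intro!: ext eq_matI)

lemma fadd_comm: fixes \<omega> :: "'b::ring_1 form" assumes a: "\<omega> \<in> blk p q" and b: "\<eta> \<in> blk p q"
  shows "fadd \<omega> \<eta> = fadd \<eta> \<omega>"
  using fdim[OF a] fdim[OF b] by (auto simp: fadd_def intro!: ext eq_matI)

lemma fadd_cancel: fixes \<omega> :: "'b::ring_1 form" assumes a: "\<omega> \<in> blk p q" and b: "\<eta> \<in> blk p q" and c: "\<zeta> \<in> blk p q"
  and e: "fadd \<omega> \<zeta> = fadd \<eta> \<zeta>" shows "\<omega> = \<eta>"
proof (rule ext, rule eq_matI)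
  fix S i j assume ij: "i < dim_row (\<eta> S)" "j < dim_col (\<eta> S)"
  have "fadd \<omega> \<zeta> S $$ (i,j) = fadd \<eta> \<zeta> S $$ (i,j)" using e by simp
  then show "\<omega> S $$ (i,j) = \<eta> S $$ (i,j)" using fdim[OF a] fdim[OF b] fdim[OF c] ij
    by (simp add: fadd_def)
qed (use fdim[OF a] fdim[OF b] in auto)

lemma fsmult_one: fixes \<omega> :: "'b::ring_1 form" assumes "sc c = 1" "\<omega> \<in> blk p q" shows "fsmult sc c \<omega> = \<omega>"
  using assms fdim[OF assms(2)] by (auto simp: fsmult_def intro!: eq_matI)

lemma fsmult_zf: "fsmult (sc::complex\<Rightarrow>'b::ring_1) c (zf p q) = zf p q"
  by (auto simp: fsmult_def zf_def intro!: ext eq_matI)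

lemma fneg_cancel: fixes \<omega> :: "'b::ring_1 form" assumes "sc c = -1" "\<omega> \<in> blk p q" "\<eta> \<in> blk p q"
  and e: "fadd (fsmult sc c \<omega>) \<eta> = zf p q" shows "\<eta> = \<omega>"
proof (rule ext, rule eq_matI)
  fix S i j assume ij: "i < dim_row (\<omega> S)" "j < dim_col (\<omega> S)"
  have "fadd (fsmult sc c \<omega>) \<eta> S $$ (i,j) = zf p q S $$ (i,j)" using e by simp
  then show "\<eta> S $$ (i,j) = \<omega> S $$ (i,j)" using fdim[OF assms(2)] fdim[OF assms(3)] ij assms(1)
    by (simp add: fadd_def fsmult_def zf_def)
qed (use fdim[OF assms(2)] fdim[OF assms(3)] in auto)

lemma of0_mult: assumes "A \<in> carrier_mat p k" "B \<in> carrier_mat k q"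
  shows "fmult (of0 A) (of0 B) = of0 (A*B)"
proof (rule form_eqI)
  fix x y
  show "fmult (of0 A) (of0 B) (x,y) = of0 (A*B) (x,y)"
    using assms by (cases x; cases y) (auto simp: fmult_def of0_def intro!: eq_matI)
qed

lemma of0_add: fixes A :: "'b::ring_1 mat" assumes "A \<in> carrier_mat p q" "B \<in> carrier_mat p q"
  shows "of0 (A+B) = fadd (of0 A) (of0 B)"
  using assms by (auto simp: fadd_def of0_def intro!: ext eq_matI)

lemma of0_oneR: assumes a: "\<omega> \<in> blk p q" shows "fmult \<omega> (of0 (1\<^sub>m q)) = \<omega>"
proof (rule form_eqI)
  fix x y
  note D = fdim[OF a]
  show "fmult \<omega> (of0 (1\<^sub>m q)) (x,y) = \<omega> (x,y)"
    by (cases x; cases y) (auto simp: fmult_def of0_def D intro!: eq_matI)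
qed

lemma of0_oneL: assumes a: "\<omega> \<in> blk p q" shows "fmult (of0 (1\<^sub>m p)) \<omega> = \<omega>"
proof (rule form_eqI)
  fix x y
  note D = fdim[OF a]
  show "fmult (of0 (1\<^sub>m p)) \<omega> (x,y) = \<omega> (x,y)"
    by (cases x; cases y) (auto simp: fmult_def of0_def D intro!: eq_matI)
qed

lemma homog_of0: "homog 0 (of0 A)"
  by (auto simp: homog_def of0_def fdeg_def)

lemma sc_one: "unital_calg sc \<Longrightarrow> sc 1 = 1"
  unfolding unital_calg_def by auto

lemma sc_m1: assumes "unital_calg sc" shows "sc (-1) = -1"
proof -
  from assms have a: "\<And>a b. sc (a + b) = sc a + sc b" and o: "sc 1 = 1" unfolding unital_calg_def by auto
  have "sc 0 = sc 0 + sc 0" using a[of 0 0] by simp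
  hence z: "sc 0 = 0" by simp
  have "sc (-1) + sc 1 = sc 0" using a[of "-1" 1] by simp
  thus ?thesis using z o by (simp add: eq_neg_iff_add_eq_0)
qed

lemma D_blk: "size_resp_deriv n0 sc D \<Longrightarrow> n0 \<le> p \<Longrightarrow> n0 \<le> q \<Longrightarrow> \<omega> \<in> blk p q \<Longrightarrow> D \<omega> \<in> blk p q"
  unfolding size_resp_deriv_def by auto

lemma D_add: "size_resp_deriv n0 sc D \<Longrightarrow> n0 \<le> p \<Longrightarrow> n0 \<le> q \<Longrightarrow> \<omega> \<in> blk p q \<Longrightarrow> \<eta> \<in> blk p q
   \<Longrightarrow> D (fadd \<omega> \<eta>) = fadd (D \<omega>) (D \<eta>)"
  unfolding size_resp_deriv_def by blast

lemma D_homog: "size_resp_deriv n0 sc D \<Longrightarrow> n0 \<le> p \<Longrightarrow> n0 \<le> q \<Longrightarrow> \<omega> \<in> blk p q \<Longrightarrow> homog r \<omega>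
   \<Longrightarrow> homog (Suc r) (D \<omega>)"
  unfolding size_resp_deriv_def by blast

lemma D_leib: "size_resp_deriv n0 sc D \<Longrightarrow> n0 \<le> p \<Longrightarrow> n0 \<le> k \<Longrightarrow> n0 \<le> q \<Longrightarrow> \<omega> \<in> blk p k \<Longrightarrow> \<eta> \<in> blk k q
   \<Longrightarrow> homog r \<omega> \<Longrightarrow> D (fmult \<omega> \<eta>) = fadd (fmult (D \<omega>) \<eta>) (fsmult sc ((-1) ^ r) (fmult \<omega> (D \<eta>)))"
  unfolding size_resp_deriv_def by blast

lemma D_constL:
  assumes Dd: "size_resp_deriv n0 sc D" and cal: "unital_calg sc"
    and n: "n0 \<le> p" "n0 \<le> k" "n0 \<le> q" and C: "C \<in> carrier_mat p k" and DC: "D (of0 C) = zf p k"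
    and w: "\<omega> \<in> blk k q"
  shows "D (fmult (of0 C) \<omega>) = fmult (of0 C) (D \<omega>)"
proof -
  have "D (fmult (of0 C) \<omega>) = fadd (fmult (D (of0 C)) \<omega>) (fsmult sc ((-1) ^ 0) (fmult (of0 C) (D \<omega>)))"
    by (rule D_leib[OF Dd n of0_blk[OF C] w homog_of0])
  also have "\<dots> = fmult (of0 C) (D \<omega>)"
    using DC fmult_zfL[OF w] fsmult_one[OF _ fmult_blk[OF of0_blk[OF C] D_blk[OF Dd n(2,3) w]]] sc_one[OF cal]
      fadd_zfL[OF fmult_blk[OF of0_blk[OF C] D_blk[OF Dd n(2,3) w]]] by simp
  finally show ?thesis .
qed

lemma D_constR:
  assumes Dd: "size_resp_deriv n0 sc D"
    and n: "n0 \<le> p" "n0 \<le> k" "n0 \<le> q" and C: "C \<in> carrier_mat k q" and DC: "D (of0 C) = zf k q"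
    and w: "\<omega> \<in> blk p k" and h: "homog r \<omega>"
  shows "D (fmult \<omega> (of0 C)) = fmult (D \<omega>) (of0 C)"
proof -
  have "D (fmult \<omega> (of0 C)) = fadd (fmult (D \<omega>) (of0 C)) (fsmult sc ((-1) ^ r) (fmult \<omega> (D (of0 C))))"
    by (rule D_leib[OF Dd n w of0_blk[OF C] h])
  also have "\<dots> = fmult (D \<omega>) (of0 C)"
    using DC fmult_zfR[OF w] fsmult_zf[of sc "(-1)^r" p q] fadd_zfR[OF fmult_blk[OF D_blk[OF Dd n(1,2) w] of0_blk[OF C]]] by simp
  finally show ?thesis .
qed

lemma mat_eqs: fixes A B :: "'b::ring_1 mat"
  assumes "A \<in> carrier_mat p q" "B \<in> carrier_mat p q" 
  shows "A - B + B = A" "A = B + (A - B)"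
  using assms by (auto intro!: eq_matI)

lemma solveD:
  fixes K Xi M :: "'b::ring_1 mat"
  assumes Dd: "size_resp_deriv n0 sc D" and cal: "unital_calg sc" and n: "n0 \<le> n"
    and K: "K \<in> carrier_mat n n" and X: "Xi \<in> carrier_mat n n" and M: "M \<in> carrier_mat n n"
    and DK: "D (of0 K) = zf n n"
    and M1: "M * (1\<^sub>m n - K * Xi) = 1\<^sub>m n" and M2: "(1\<^sub>m n - K * Xi) * M = 1\<^sub>m n"
  shows "D (of0 (Xi * M)) = fmult (of0 (1\<^sub>m n + Xi * M * K)) (fmult (D (of0 Xi)) (of0 M))"
proof -
  define Y where "Y = Xi * M"
  have Y: "Y \<in> carrier_mat n n" using X M Y_def by simp
  have KX: "K * Xi \<in> carrier_mat n n" using K X by simp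
  have CC: "K * (Xi * M) \<in> carrier_mat n n" "Xi * M * K \<in> carrier_mat n n" "Y * K \<in> carrier_mat n n"
    "Xi * M \<in> carrier_mat n n" "1\<^sub>m n \<in> carrier_mat n n" using K X M Y by auto
  note dims = carrier_matD[OF K] carrier_matD[OF X] carrier_matD[OF M] carrier_matD[OF Y]
  have eY0: "Xi = Y - Y * (K * Xi)"
  proof -
    have "Xi = Xi * (M * (1\<^sub>m n - K * Xi))" using M1 X by simp
    also have "\<dots> = Y * (1\<^sub>m n - K * Xi)" unfolding Y_def using X M KX
      by (simp add: massoc dims)
    also have "\<dots> = Y - Y * (K * Xi)" using Y KX by (simp add: mdistLm dims)
    finally show ?thesis .
  qed
  have eY: "Y = Xi + Y * (K * Xi)"
    using eY0 mat_eqs(1)[of Y n n "Y * (K * Xi)"] Y KX by simp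
  have eM0: "1\<^sub>m n = M - K * (Xi * M)"
  proof -
    have "1\<^sub>m n = (1\<^sub>m n - K * Xi) * M" using M2 by simp
    also have "\<dots> = M - K * (Xi * M)" using M KX K X by (simp add: mdistRm massoc dims)
    finally show ?thesis .
  qed
  have eM: "M = 1\<^sub>m n + K * (Xi * M)"
    using mat_eqs(1)[of M n n "K * (Xi * M)"] eM0 M K X by simp
  define x where "x = of0 Xi"
  define y where "y = of0 Y"
  define k where "k = of0 K"
  define m where "m = of0 M"
  define dx where "dx = D x"
  define dy where "dy = D y"
  have bx: "x \<in> blk n n" "y \<in> blk n n" "k \<in> blk n n" "m \<in> blk n n"
    using X Y K M by (auto simp: x_def y_def k_def m_def of0_blk)
  have bd: "dx \<in> blk n n" "dy \<in> blk n n" using bx D_blk[OF Dd n n] by (auto simp: dx_def dy_def)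
  have FM: "\<And>a b. a \<in> blk n n \<Longrightarrow> b \<in> blk n n \<Longrightarrow> fmult a b \<in> blk n n" by (rule fmult_blk)
  have FA: "\<And>a b. a \<in> blk n n \<Longrightarrow> b \<in> blk n n \<Longrightarrow> fadd a b \<in> blk n n" by (rule fadd_blk)
  have AS: "\<And>a b c. a \<in> blk n n \<Longrightarrow> b \<in> blk n n \<Longrightarrow> c \<in> blk n n \<Longrightarrow> fmult (fmult a b) c = fmult a (fmult b c)"
    by (rule fmult_assoc)
  have ye: "y = fadd x (fmult y (fmult k x))"
  proof -
    have "y = of0 (Xi + Y * (K * Xi))" using eY y_def by simp
    also have "\<dots> = fadd x (of0 (Y * (K * Xi)))" using X Y KX by (simp add: of0_add[of _ n n] x_def)
    also have "of0 (Y * (K * Xi)) = fmult y (fmult k x)" using X Y K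
      by (simp add: of0_mult[of _ n n _ n] y_def k_def x_def)
    finally show ?thesis .
  qed
  have Dkx: "D (fmult k x) = fmult k dx"
    unfolding k_def dx_def by (rule D_constL[OF Dd cal n n n K DK[folded k_def, unfolded k_def] bx(1)])
  have e1: "dy = fadd dx (fadd (fmult dy (fmult k x)) (fmult y (fmult k dx)))"
  proof -
    have "dy = D (fadd x (fmult y (fmult k x)))" using ye dy_def by simp
    also have "\<dots> = fadd dx (D (fmult y (fmult k x)))"
      using D_add[OF Dd n n bx(1) FM[OF bx(2) FM[OF bx(3) bx(1)]]] dx_def by simp
    also have "D (fmult y (fmult k x)) = fadd (fmult dy (fmult k x)) (fsmult sc ((-1)^0) (fmult y (D (fmult k x))))"
      unfolding dy_def by (rule D_leib[OF Dd n n n bx(2) FM[OF bx(3) bx(1)]]) (simp add: y_def homog_of0)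
    also have "fsmult sc ((-1)^0) (fmult y (D (fmult k x))) = fmult y (fmult k dx)"
      using Dkx fsmult_one[of sc 1, OF sc_one[OF cal] FM[OF bx(2) FM[OF bx(3) bd(1)]]] by simp
    finally show ?thesis .
  qed
  define Z where "Z = fmult dy (fmult k (fmult x m))"
  define W where "W = fmult y (fmult k (fmult dx m))"
  have bZW: "Z \<in> blk n n" "W \<in> blk n n" using FM bx bd by (auto simp: Z_def W_def)
  have e2: "fmult dy m = fadd (fmult dx m) (fadd Z W)"
  proof -
    have "fmult dy m = fmult (fadd dx (fadd (fmult dy (fmult k x)) (fmult y (fmult k dx)))) m"
      using e1 by simp
    also have "\<dots> = fadd (fmult dx m) (fmult (fadd (fmult dy (fmult k x)) (fmult y (fmult k dx))) m)"
      by (rule fmult_fadd_R[OF bd(1) FA[OF FM[OF bd(2) FM[OF bx(3) bx(1)]] FM[OF bx(2) FM[OF bx(3) bd(1)]]] bx(4)])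
    also have "fmult (fadd (fmult dy (fmult k x)) (fmult y (fmult k dx))) m
       = fadd (fmult (fmult dy (fmult k x)) m) (fmult (fmult y (fmult k dx)) m)"
      by (rule fmult_fadd_R[OF FM[OF bd(2) FM[OF bx(3) bx(1)]] FM[OF bx(2) FM[OF bx(3) bd(1)]] bx(4)])
    also have "fmult (fmult dy (fmult k x)) m = Z"
      unfolding Z_def using AS[OF bd(2) FM[OF bx(3) bx(1)] bx(4)] AS[OF bx(3) bx(1) bx(4)] by simp
    also have "fmult (fmult y (fmult k dx)) m = W"
      unfolding W_def using AS[OF bx(2) FM[OF bx(3) bd(1)] bx(4)] AS[OF bx(3) bd(1) bx(4)] by simp
    finally show ?thesis .
  qed
  have e3: "fmult dy m = fadd dy Z"
  proof -
    have "of0 (1\<^sub>m n + K * (Xi * M)) = fadd (of0 (1\<^sub>m n)) (fmult k (fmult x m))"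
      using M K X CC by (simp add: m_def of0_add[of _ n n] of0_mult[of _ n n _ n] k_def x_def)
    hence "fmult dy m = fmult dy (fadd (of0 (1\<^sub>m n)) (fmult k (fmult x m)))"
      using eM m_def by metis
    also have "\<dots> = fadd dy Z"
      using fmult_fadd_L[OF bd(2) of0_blk[of "1\<^sub>m n" n n] FM[OF bx(3) FM[OF bx(1) bx(4)]]] of0_oneR[OF bd(2)]
      by (simp add: Z_def)
    finally show ?thesis .
  qed
  have "fadd dy Z = fadd (fadd (fmult dx m) W) Z"
    using e2 e3 fadd_assoc[OF FM[OF bd(1) bx(4)] bZW(2) bZW(1)] fadd_comm[OF bZW] by simp
  hence e4: "dy = fadd (fmult dx m) W"
    using fadd_cancel[OF bd(2) FA[OF FM[OF bd(1) bx(4)] bZW(2)] bZW(1)] by simp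
  have "fmult (of0 (1\<^sub>m n + Xi * M * K)) (fmult dx m) = fmult (fadd (of0 (1\<^sub>m n)) (fmult y k)) (fmult dx m)"
    using Y K X M CC by (simp add: of0_add[of _ n n] of0_mult[of _ n n _ n] y_def k_def Y_def)
  also have "\<dots> = fadd (fmult dx m) W"
    using fmult_fadd_R[OF of0_blk[of "1\<^sub>m n" n n] FM[OF bx(2) bx(3)] FM[OF bd(1) bx(4)]] of0_oneL[OF FM[OF bd(1) bx(4)]]
      AS[OF bx(2) bx(3) FM[OF bd(1) bx(4)]] by (simp add: W_def)
  finally show ?thesis using e4 by (simp add: dy_def y_def Y_def dx_def x_def m_def)
qed

lemma PM_ident:
  fixes P K Xi M V U :: "'b::ring_1 mat"
  assumes P: "P \<in> carrier_mat n n" and K: "K \<in> carrier_mat n n" and X: "Xi \<in> carrier_mat n n"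
    and M: "M \<in> carrier_mat n n" and V: "V \<in> carrier_mat n m" and U: "U \<in> carrier_mat m n"
    and H: "P * (K * Xi) - (K * Xi) * P = V * U * Xi"
    and M1: "M * (1\<^sub>m n - K * Xi) = 1\<^sub>m n" and M2: "(1\<^sub>m n - K * Xi) * M = 1\<^sub>m n"
  shows "P * M = M * (P + V * (U * (Xi * M)))"
proof -
  define A where "A = 1\<^sub>m n - K * Xi"
  have A: "A \<in> carrier_mat n n" using K X A_def by (auto intro!: minus_carrier_mat)
  have CC: "K * Xi \<in> carrier_mat n n" "V * U * Xi \<in> carrier_mat n n" "P * A \<in> carrier_mat n n"
    "K * Xi * P \<in> carrier_mat n n" "P * (K * Xi) \<in> carrier_mat n n"
    by (rule mult_carrier_mat[OF K X], rule mult_carrier_mat[OF mult_carrier_mat[OF V U] X],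
      rule mult_carrier_mat[OF P A], rule mult_carrier_mat[OF mult_carrier_mat[OF K X] P],
      rule mult_carrier_mat[OF P mult_carrier_mat[OF K X]])
  note dims = carrier_matD[OF P] carrier_matD[OF K] carrier_matD[OF X] carrier_matD[OF M]
    carrier_matD[OF V] carrier_matD[OF U] carrier_matD[OF A]
  have AP: "A * P = P * A + V * U * Xi"
  proof -
    have e1: "A * P = P - K * Xi * P" unfolding A_def using P CC by (simp add: mdistRm dims)
    have e2: "P * A = P - P * (K * Xi)" unfolding A_def using P CC by (simp add: mdistLm dims)
    show ?thesis unfolding e1 e2
    proof (rule eq_matI)
      fix i j assume ij: "i < dim_row (P - P * (K * Xi) + V * U * Xi)" "j < dim_col (P - P * (K * Xi) + V * U * Xi)"
      have "(P * (K * Xi) - (K * Xi) * P) $$ (i,j) = (V * U * Xi) $$ (i,j)" using H by simp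
      then show "(P - K * Xi * P) $$ (i, j) = (P - P * (K * Xi) + V * U * Xi) $$ (i, j)"
        using ij P CC by (simp add: dims algebra_simps)
    qed (use P CC in \<open>simp_all add: dims\<close>)
  qed
  have "P * M = (M * A) * P * M" using M1 A_def P M by simp
  also have "\<dots> = M * ((A * P) * M)" using dims by (simp add: massoc)
  also have "\<dots> = M * ((P * A) * M + (V * U * Xi) * M)" unfolding AP using CC M by (simp add: mdistR dims)
  also have "(P * A) * M = P" using M2 A_def P by (simp add: massoc dims)
  also have "(V * U * Xi) * M = V * (U * (Xi * M))" using dims by (simp add: massoc)
  finally show ?thesis .
qed

theorem corollary2p4:
  fixes n0 n m :: nat
    and sc :: "complex \<Rightarrow> 'b::ring_1"
    and d db :: "'b form \<Rightarrow> 'b form"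
    and P K Xi M :: "'b mat" and V U :: "'b mat"
  assumes "bdga n0 sc d db"
    and "n0 \<le> n" and "n0 \<le> m"
    and "P \<in> carrier_mat n n" and "K \<in> carrier_mat n n"
    and "V \<in> carrier_mat n m" and "U \<in> carrier_mat m n"
    and "Xi \<in> carrier_mat n n"
    and "const_mat d db P" and "const_mat d db K" and "const_mat d db V" and "const_mat d db U"
    and "db (of0 Xi) = fmult (d (of0 Xi)) (of0 P)"
    and "P * (K * Xi) - (K * Xi) * P = V * U * Xi"
    and "M \<in> carrier_mat n n"
    and "(1\<^sub>m n - K * Xi) * M = 1\<^sub>m n" and "M * (1\<^sub>m n - K * Xi) = 1\<^sub>m n"
  shows "db (d (of0 (U * Xi * M * V))) = fmult (d (of0 (U * Xi * M * V))) (d (of0 (U * Xi * M * V)))"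
proof -
  note A = assms
  have cal: "unital_calg sc" and Dd: "size_resp_deriv n0 sc d" and Ed: "size_resp_deriv n0 sc db"
    and sq: "\<And>p q \<omega>. n0 \<le> p \<Longrightarrow> n0 \<le> q \<Longrightarrow> \<omega> \<in> blk p q \<Longrightarrow>
        d (d \<omega>) = zf p q \<and> db (db \<omega>) = zf p q \<and> fadd (d (db \<omega>)) (db (d \<omega>)) = zf p q"
    using A(1) unfolding bdga_def by blast+
  have n: "n0 \<le> n" and mm: "n0 \<le> m" using A by auto
  have P: "P \<in> carrier_mat n n" and K: "K \<in> carrier_mat n n" and V: "V \<in> carrier_mat n m"
    and U: "U \<in> carrier_mat m n" and X: "Xi \<in> carrier_mat n n" and M: "M \<in> carrier_mat n n"
    using A by auto
  have cP: "d (of0 P) = zf n n" "db (of0 P) = zf n n" using A(9) P unfolding const_mat_def by auto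
  have cK: "d (of0 K) = zf n n" "db (of0 K) = zf n n" using A(10) K unfolding const_mat_def by auto
  have cV: "d (of0 V) = zf n m" "db (of0 V) = zf n m" using A(11) V unfolding const_mat_def by auto
  have cU: "d (of0 U) = zf m n" "db (of0 U) = zf m n" using A(12) U unfolding const_mat_def by auto
  define Y where "Y = Xi * M"
  have Y: "Y \<in> carrier_mat n n" unfolding Y_def by (rule mult_carrier_mat[OF X M])
  define Q where "Q = P + V * (U * Y)"
  have UY: "U * Y \<in> carrier_mat m n" by (rule mult_carrier_mat[OF U Y])
  have VUY: "V * (U * Y) \<in> carrier_mat n n" by (rule mult_carrier_mat[OF V UY])
  have Q: "Q \<in> carrier_mat n n" unfolding Q_def using P VUY by simp
  define N where "N = 1\<^sub>m n + Xi * M * K"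
  have N: "N \<in> carrier_mat n n" unfolding N_def
    using mult_carrier_mat[OF mult_carrier_mat[OF X M] K] by simp
  define x where "x = of0 Xi"
  define y where "y = of0 Y"
  define p where "p = of0 P"
  define q where "q = of0 Q"
  define mf where "mf = of0 M"
  define u where "u = of0 U"
  define v where "v = of0 V"
  define nf where "nf = of0 N"
  define dx where "dx = d x"
  define dy where "dy = d y"
  have bx: "x \<in> blk n n" "y \<in> blk n n" "p \<in> blk n n" "q \<in> blk n n" "mf \<in> blk n n" "nf \<in> blk n n"
    "u \<in> blk m n" "v \<in> blk n m"
    using X Y P Q M N U V
    by (simp_all add: x_def y_def p_def q_def mf_def nf_def u_def v_def of0_blk)
  have bd: "dx \<in> blk n n" "dy \<in> blk n n"
    unfolding dx_def dy_def by (rule D_blk[OF Dd n n bx(1)], rule D_blk[OF Dd n n bx(2)])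
  have hy: "homog 0 y" unfolding y_def by (rule homog_of0)
  have hdy: "homog 1 dy" unfolding dy_def using D_homog[OF Dd n n bx(2) hy] by simp
  have dY: "dy = fmult nf (fmult dx mf)"
    using solveD[OF Dd cal n K X M cK(1) A(17) A(16)]
    by (simp add: dy_def y_def Y_def nf_def N_def dx_def x_def mf_def)
  have eY: "db y = fmult nf (fmult (db x) mf)"
    using solveD[OF Ed cal n K X M cK(2) A(17) A(16)]
    by (simp add: y_def Y_def nf_def N_def x_def mf_def)
  have PM: "P * M = M * Q" unfolding Q_def Y_def by (rule PM_ident[OF P K X M V U A(14) A(17) A(16)])
  have pm: "fmult p mf = fmult mf q"
    using of0_mult[OF P M] of0_mult[OF M Q] PM by (simp add: p_def mf_def q_def)
  have Ey: "db y = fmult dy q"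
  proof -
    have "db y = fmult nf (fmult (fmult dx p) mf)" using eY A(13) by (simp add: dx_def x_def p_def)
    also have "fmult (fmult dx p) mf = fmult dx (fmult p mf)" by (rule fmult_assoc[OF bd(1) bx(3) bx(5)])
    also have "\<dots> = fmult dx (fmult mf q)" using pm by simp
    also have "\<dots> = fmult (fmult dx mf) q" by (rule fmult_assoc[OF bd(1) bx(5) bx(4), symmetric])
    also have "fmult nf (fmult (fmult dx mf) q) = fmult (fmult nf (fmult dx mf)) q"
      by (rule fmult_assoc[OF bx(6) fmult_blk[OF bd(1) bx(5)] bx(4), symmetric])
    finally show ?thesis using dY by simp
  qed
  have buy: "fmult u y \<in> blk m n" by (rule fmult_blk[OF bx(7) bx(2)])
  have budy: "fmult u dy \<in> blk m n" by (rule fmult_blk[OF bx(7) bd(2)])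
  have qe: "q = fadd p (fmult v (fmult u y))"
    using of0_add[OF P VUY] of0_mult[OF V UY] of0_mult[OF U Y]
    by (simp add: q_def Q_def p_def v_def u_def y_def)
  have dq: "d q = fmult v (fmult u dy)"
  proof -
    have "d q = fadd (d p) (d (fmult v (fmult u y)))"
      unfolding qe by (rule D_add[OF Dd n n bx(3) fmult_blk[OF bx(8) buy]])
    also have "d (fmult v (fmult u y)) = fmult v (d (fmult u y))"
      unfolding v_def by (rule D_constL[OF Dd cal n mm n V cV(1) buy])
    also have "d (fmult u y) = fmult u dy"
      unfolding u_def dy_def by (rule D_constL[OF Dd cal mm n n U cU(1) bx(2)])
    finally show ?thesis using cP(1) fadd_zfL[OF fmult_blk[OF bx(8) budy]] by (simp add: p_def)
  qed
  define G where "G = fmult dy (fmult v (fmult u dy))"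
  have bG: "G \<in> blk n n" unfolding G_def by (rule fmult_blk[OF bd(2) fmult_blk[OF bx(8) budy]])
  have dEy: "d (db y) = fsmult sc (-1) G"
  proof -
    have "d (db y) = fadd (fmult (d dy) q) (fsmult sc ((-1)^1) (fmult dy (d q)))"
      unfolding Ey by (rule D_leib[OF Dd n n n bd(2) bx(4) hdy])
    also have "d dy = zf n n" using sq[OF n n bx(2)] by (simp add: dy_def)
    finally show ?thesis using fmult_zfL[OF bx(4), of n] fadd_zfL[OF fsmult_blk[OF bG]] dq
      by (simp add: G_def)
  qed
  have EDy: "db dy = G"
  proof (rule fneg_cancel[of sc "-1", OF sc_m1[OF cal] bG D_blk[OF Ed n n bd(2)]])
    show "fadd (fsmult sc (-1) G) (db dy) = zf n n"
      using sq[OF n n bx(2)] dEy by (simp add: dy_def)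
  qed
  have phi: "U * Xi * M * V = U * (Y * V)"
    unfolding Y_def using U X M V by (simp add: massoc carrier_matD)
  have YV: "Y * V \<in> carrier_mat n m" by (rule mult_carrier_mat[OF Y V])
  have ophi: "of0 (U * Xi * M * V) = fmult u (fmult y v)"
    unfolding phi using of0_mult[OF U YV] of0_mult[OF Y V] by (simp add: u_def y_def v_def)
  have byv: "fmult y v \<in> blk n m" by (rule fmult_blk[OF bx(2) bx(8)])
  have bdyv: "fmult dy v \<in> blk n m" by (rule fmult_blk[OF bd(2) bx(8)])
  have dphi: "d (of0 (U * Xi * M * V)) = fmult u (fmult dy v)"
  proof -
    have "d (fmult u (fmult y v)) = fmult u (d (fmult y v))"
      unfolding u_def by (rule D_constL[OF Dd cal mm n mm U cU(1) byv])
    also have "d (fmult y v) = fmult dy v"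
      unfolding v_def dy_def by (rule D_constR[OF Dd n n mm V cV(1) bx(2) hy])
    finally show ?thesis using ophi by simp
  qed
  have Edphi: "db (d (of0 (U * Xi * M * V))) = fmult u (fmult G v)"
  proof -
    have "db (fmult u (fmult dy v)) = fmult u (db (fmult dy v))"
      unfolding u_def by (rule D_constL[OF Ed cal mm n mm U cU(2) bdyv])
    also have "db (fmult dy v) = fmult (db dy) v"
      unfolding v_def by (rule D_constR[OF Ed n n mm V cV(2) bd(2) hdy])
    finally show ?thesis using dphi EDy by simp
  qed
  have bT: "fmult u (fmult dy v) \<in> blk m m" by (rule fmult_blk[OF bx(7) bdyv])
  have budyv: "fmult u (fmult dy v) \<in> blk m m" by (rule bT)
  have L: "fmult u (fmult G v) = fmult u (fmult dy (fmult v (fmult u (fmult dy v))))"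
  proof -
    have "fmult G v = fmult dy (fmult (fmult v (fmult u dy)) v)"
      unfolding G_def by (rule fmult_assoc[OF bd(2) fmult_blk[OF bx(8) budy] bx(8)])
    also have "fmult (fmult v (fmult u dy)) v = fmult v (fmult (fmult u dy) v)"
      by (rule fmult_assoc[OF bx(8) budy bx(8)])
    also have "fmult (fmult u dy) v = fmult u (fmult dy v)"
      by (rule fmult_assoc[OF bx(7) bd(2) bx(8)])
    finally show ?thesis by simp
  qed
  have R: "fmult (fmult u (fmult dy v)) (fmult u (fmult dy v)) = fmult u (fmult dy (fmult v (fmult u (fmult dy v))))"
  proof -
    have "fmult (fmult u (fmult dy v)) (fmult u (fmult dy v)) = fmult u (fmult (fmult dy v) (fmult u (fmult dy v)))"
      by (rule fmult_assoc[OF bx(7) bdyv bT])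
    also have "fmult (fmult dy v) (fmult u (fmult dy v)) = fmult dy (fmult v (fmult u (fmult dy v)))"
      by (rule fmult_assoc[OF bd(2) bx(8) bT])
    finally show ?thesis .
  qed
  show ?thesis using Edphi L R dphi by simp
qed

end
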